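(* The function $h$ is non-differentiable on $D(h)$: at no point $x_0\in D(h)$ does the difference quotient $\frac{h(x)-h(x_0)}{x-x_0}$, $x\in D(h)$, $x\to x_0$, have a finite limit.
   Context: Let $q>3$ be an integer, fix $u\in\{0,1,\ldots,q-1\}$, and put $\Theta=\{1,2,\ldots,q-1\}\setminus\{u\}$. The nega-$q$-ary representation is $\Delta^{-q}_{\beta_1\beta_2\ldots}=\sum_{k\ge1}\frac{\beta_k}{(-q)^k}$, $\beta_k\in\{0,\ldots,q-1\}$. For a sequence $(\alpha_n)_{n\ge1}$ with $\alpha_n\in\Theta$, let $x((\alpha_n))$ be the number whose nega-$q$-ary digit string is the concatenation of the blocks $\underbrace{u\ldots u}_{\alpha_n-1}\alpha_n$ ($\alpha_n-1$ copies of $u$ followed by the digit $\alpha_n$), $n=1,2,\ldots$; equivalently $x=-\frac{u}{q+1}+\sum_{n\ge1}\frac{\alpha_n-u}{(-q)^{\alpha_1+\cdots+\alpha_n}}$. Let $D(h)$ be the set of all such $x$, and define $h:D(h)\to\mathbb R$ by $h(x)=\Delta^{-q}_{\alpha_1\alpha_2\ldots}=\sum_{n\ge1}\frac{\alpha_n}{(-q)^n}$. *)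

theory Defs
  imports "HOL-Analysis.Analysis"
begin

definition Theta :: "nat \<Rightarrow> nat \<Rightarrow> nat set" where
  "Theta q u = {1..q-1} - {u}"

text \<open>Admissible sequences; alpha 0 plays the role of alpha_1, alpha n of alpha_(n+1).\<close>
definition adm_seqs :: "nat \<Rightarrow> nat \<Rightarrow> (nat \<Rightarrow> nat) set" where
  "adm_seqs q u = {a. \<forall>n. a n \<in> Theta q u}"

definition xval :: "nat \<Rightarrow> nat \<Rightarrow> (nat \<Rightarrow> nat) \<Rightarrow> real" where
  "xval q u a = - real u / (real q + 1)
     + (\<Sum>n. (real (a n) - real u) / (- real q) ^ (\<Sum>k\<le>n. a k))"

definition negaq :: "nat \<Rightarrow> (nat \<Rightarrow> nat) \<Rightarrow> real" where
  "negaq q a = (\<Sum>n. real (a n) / (- real q) ^ (Suc n))"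

definition Dh :: "nat \<Rightarrow> nat \<Rightarrow> real set" where
  "Dh q u = xval q u ` adm_seqs q u"

definition h :: "nat \<Rightarrow> nat \<Rightarrow> real \<Rightarrow> real" where
  "h q u x = negaq q (SOME a. a \<in> adm_seqs q u \<and> xval q u a = x)"

end

theory Submission
  imports Defs
begin


definition adm :: "nat \<Rightarrow> nat \<Rightarrow> (nat \<Rightarrow> nat) \<Rightarrow> bool" where
  "adm q u a \<longleftrightarrow> (\<forall>n. 1 \<le> a n \<and> a n \<le> q - 1 \<and> a n \<noteq> u)"

definition Yv :: "nat \<Rightarrow> nat \<Rightarrow> (nat \<Rightarrow> nat) \<Rightarrow> nat \<Rightarrow> real" where
  "Yv q u a n = (real (a n) - real u) / (- real q) ^ (\<Sum>k\<le>n. a k)"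

lemma adm_seqs_iff: "a \<in> adm_seqs q u \<longleftrightarrow> adm q u a"
  unfolding adm_seqs_def adm_def Theta_def by auto

lemma adm_sh: "adm q u a \<Longrightarrow> adm q u (\<lambda>n. a (Suc n))"
  unfolding adm_def by auto

lemma adm_shm: "adm q u a \<Longrightarrow> adm q u (\<lambda>n. a (n + m))"
  unfolding adm_def by auto

lemma sum_ge: "adm q u a \<Longrightarrow> n + 1 \<le> (\<Sum>k\<le>n. a k)"
proof (induction n)
  case 0 then show ?case by (simp add: adm_def)
next
  case (Suc n)
  have "1 \<le> a (Suc n)" using Suc.prems by (simp add: adm_def)
  then show ?case using Suc by simp
qed

lemma Yv_bound:
  assumes "adm q u a" "q > 3" "u \<le> q - 1"
  shows "\<bar>Yv q u a n\<bar> \<le> real q * (1 / real q) ^ n"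
proof -
  have q: "real q \<ge> 4" using assms by simp
  have "a n \<le> q - 1" using assms unfolding adm_def by auto
  then have "real (a n) \<le> real q" "real u \<le> real q" using assms by linarith+
  then have d: "\<bar>real (a n) - real u\<bar> \<le> real q" by linarith
  have "real q ^ n \<le> real q ^ (\<Sum>k\<le>n. a k)"
    using sum_ge[OF assms(1), of n] q by (intro power_increasing) auto
  then have "\<bar>Yv q u a n\<bar> = \<bar>real (a n) - real u\<bar> / real q ^ (\<Sum>k\<le>n. a k)"
    unfolding Yv_def by (simp add: power_abs)
  also have "\<dots> \<le> real q / real q ^ n"
    using d q \<open>real q ^ n \<le> _\<close> by (intro frac_le) auto
  finally show ?thesis by (simp add: power_divide)
qed

lemma Yv_summable:
  assumes "adm q u a" "q > 3" "u \<le> q - 1"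
  shows "summable (Yv q u a)"
proof (rule summable_comparison_test)
  show "\<exists>N. \<forall>n\<ge>N. norm (Yv q u a n) \<le> real q * (1 / real q) ^ n"
    using Yv_bound[OF assms] by auto
  show "summable (\<lambda>n. real q * (1 / real q) ^ n)"
    using assms by (intro summable_mult summable_geometric) auto
qed

lemma xval_Yv: "xval q u a = - real u / (real q + 1) + suminf (Yv q u a)"
  unfolding xval_def Yv_def by simp

lemma Yv_Suc: "Yv q u a (Suc n) = Yv q u (\<lambda>n. a (Suc n)) n / (- real q) ^ (a 0)"
  unfolding Yv_def by (simp only: sum.atMost_Suc_shift) (simp add: power_add mult.commute)

lemma xval_rec:
  assumes "adm q u a" "q > 3" "u \<le> q - 1"
  shows "xval q u a = - real u / (real q + 1) +
     (real (a 0) - real u + real u / (real q + 1) + xval q u (\<lambda>n. a (Suc n))) / (- real q) ^ (a 0)"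
proof -
  have s: "summable (Yv q u a)" using Yv_summable[OF assms] .
  have s2: "summable (Yv q u (\<lambda>n. a (Suc n)))" using Yv_summable[OF adm_sh[OF assms(1)] assms(2,3)] .
  have "suminf (Yv q u a) = Yv q u a 0 + (\<Sum>n. Yv q u a (Suc n))"
    using suminf_split_head[OF s] by simp
  also have "(\<Sum>n. Yv q u a (Suc n)) = suminf (Yv q u (\<lambda>n. a (Suc n))) / (- real q) ^ (a 0)"
    unfolding Yv_Suc using suminf_divide[OF s2] by simp
  finally have "suminf (Yv q u a) = (real (a 0) - real u + suminf (Yv q u (\<lambda>n. a (Suc n)))) / (- real q) ^ (a 0)"
    unfolding Yv_def by (simp add: add_divide_distrib)
  then show ?thesis unfolding xval_Yv by simp
qed

lemma negaq_summable:
  assumes "adm q u a" "q > 3"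
  shows "summable (\<lambda>n. real (a n) / (- real q) ^ Suc n)"
proof (rule summable_comparison_test)
  show "\<exists>N. \<forall>n\<ge>N. norm (real (a n) / (- real q) ^ Suc n) \<le> real q * (1 / real q) ^ n"
  proof (intro exI allI impI)
    fix n
    have "a n \<le> q" using assms unfolding adm_def by (meson diff_le_self le_trans)
    then have "real (a n) / real q ^ Suc n \<le> real q / real q ^ Suc n"
      using assms by (intro divide_right_mono) auto
    also have "\<dots> \<le> real q * (1 / real q) ^ n"
      using assms by (simp add: power_divide divide_right_mono)
    finally have "real (a n) / real q ^ Suc n \<le> real q * (1 / real q) ^ n" .
    moreover have "norm (real (a n) / (- real q) ^ Suc n) = real (a n) / real q ^ Suc n"
      by (simp only: norm_divide norm_power) simp
    ultimately show "norm (real (a n) / (- real q) ^ Suc n) \<le> real q * (1 / real q) ^ n"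
      by linarith
  qed
  show "summable (\<lambda>n. real q * (1 / real q) ^ n)"
    using assms by (intro summable_mult summable_geometric) auto
qed

lemma negaq_rec:
  assumes "adm q u a" "q > 3"
  shows "negaq q a = (real (a 0) + negaq q (\<lambda>n. a (Suc n))) / (- real q)"
proof -
  have s: "summable (\<lambda>n. real (a n) / (- real q) ^ Suc n)" using negaq_summable[OF assms] .
  have s2: "summable (\<lambda>n. real (a (Suc n)) / (- real q) ^ Suc n)"
    using negaq_summable[OF adm_sh[OF assms(1)] assms(2)] .
  have "negaq q a = real (a 0) / (- real q) + (\<Sum>n. real (a (Suc n)) / (- real q) ^ Suc (Suc n))"
    unfolding negaq_def using suminf_split_head[OF s] by simp
  also have "(\<Sum>n. real (a (Suc n)) / (- real q) ^ Suc (Suc n)) = negaq q (\<lambda>n. a (Suc n)) / (- real q)"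
    unfolding negaq_def using suminf_divide[OF s2, of "- real q"]
    by (simp add: field_simps)
  finally show ?thesis by (simp add: add_divide_distrib)
qed


definition pI :: "nat \<Rightarrow> nat \<Rightarrow> real" where "pI q u = - real u / (real q + 1)"
definition inI :: "nat \<Rightarrow> real \<Rightarrow> bool" where
  "inI q v \<longleftrightarrow> - real q / (real q + 1) \<le> v \<and> v \<le> 1 / (real q + 1)"
definition sig :: "nat \<Rightarrow> real \<Rightarrow> real \<Rightarrow> real" where "sig q d v = (d + v) / (- real q)"
definition G :: "nat \<Rightarrow> nat \<Rightarrow> nat \<Rightarrow> real \<Rightarrow> real" where
  "G q u k w = pI q u + (w - pI q u) / (- real q) ^ k"
definition B :: "nat \<Rightarrow> nat \<Rightarrow> nat \<Rightarrow> real \<Rightarrow> real" where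
  "B q u al v = pI q u + (real al - real u - pI q u + v) / (- real q) ^ al"

lemma xval_recB:
  assumes "adm q u a" "q > 3" "u \<le> q - 1"
  shows "xval q u a = B q u (a 0) (xval q u (\<lambda>n. a (Suc n)))"
  using xval_rec[OF assms] unfolding B_def pI_def by simp

lemma sig_I:
  assumes "q > 3" "0 \<le> d" "d \<le> real q - 1" "inI q v"
  shows "inI q (sig q d v)"
proof -
  have q: "real q \<ge> 4" using assms by simp
  have v1: "- real q \<le> v * (real q + 1)" "v * (real q + 1) \<le> 1"
    using assms(4) q unfolding inI_def by (auto simp: field_simps)
  have d1: "d * (real q + 1) \<le> (real q - 1) * (real q + 1)"
    using assms q by (intro mult_right_mono) auto
  have d2: "0 \<le> d * (real q + 1)" using assms q by simp
  have "(d + v) * (real q + 1) \<le> real q * real q" using v1 d1 by (simp add: algebra_simps)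
  moreover have "- real q \<le> (d + v) * (real q + 1)" using v1 d2 by (simp add: algebra_simps)
  ultimately show ?thesis using q unfolding inI_def sig_def
    by (auto simp: field_simps)
qed

lemma pI_fix: "q > 0 \<Longrightarrow> (real u + pI q u) / (- real q) = pI q u"
proof -
  assume q: "q > 0"
  have "real u + pI q u = real u * real q / (real q + 1)"
    unfolding pI_def by (simp add: field_simps)
  then show ?thesis using q unfolding pI_def by simp
qed

lemma sig_u_G: "q > 0 \<Longrightarrow> sig q (real u) (G q u k w) = G q u (Suc k) w"
proof -
  assume q: "q > 0"
  have "sig q (real u) (G q u k w) = (real u + pI q u) / (- real q) + (w - pI q u) / (- real q) ^ k / (- real q)"
    unfolding sig_def G_def by (simp add: add_divide_distrib)
  also have "\<dots> = G q u (Suc k) w" unfolding pI_fix[OF q] G_def by (simp add: mult.commute)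
  finally show ?thesis .
qed

lemma G_I:
  assumes "q > 3" "u \<le> q - 1" "inI q w"
  shows "inI q (G q u k w)"
proof (induction k)
  case 0 then show ?case using assms by (simp add: G_def)
next
  case (Suc k)
  have "real u \<le> real q - 1" using assms by linarith
  then have "inI q (sig q (real u) (G q u k w))" by (intro sig_I[OF assms(1) _ _ Suc]) auto
  then show ?case using sig_u_G[of q u k w] assms by simp
qed

lemma G_add: "G q u (j + k) w = G q u j (G q u k w)"
  unfolding G_def by (simp add: power_add field_simps)

lemma B_G: "1 \<le> al \<Longrightarrow> q > 0 \<Longrightarrow> B q u al v = G q u (al - 1) (sig q (real al) v)"
proof -
  assume al: "1 \<le> al" and q: "q > 0"
  then obtain k where k: "al = Suc k" by (cases al) auto
  have "G q u (al - 1) (sig q (real al) v) = pI q u + ((real al + v) / (- real q) - pI q u) / (- real q) ^ k"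
    unfolding G_def sig_def k by simp
  also have "(real al + v) / (- real q) - pI q u = (real al - real u - pI q u + v) / (- real q)"
  proof -
    have "(real al - real u - pI q u + v) / (- real q) = ((real al + v) - (real u + pI q u)) / (- real q)"
      by (simp add: algebra_simps)
    also have "\<dots> = (real al + v) / (- real q) - pI q u"
      unfolding diff_divide_distrib pI_fix[OF q] ..
    finally show ?thesis by simp
  qed
  finally show ?thesis unfolding B_def k by (simp add: mult.commute)
qed

lemma B_I:
  assumes "q > 3" "u \<le> q - 1" "1 \<le> al" "al \<le> q - 1" "inI q v"
  shows "inI q (B q u al v)"
proof -
  have "real al \<le> real q - 1" using assms by linarith
  then show ?thesis using B_G[OF assms(3)] assms G_I sig_I by simp
qed


definition dI :: "nat \<Rightarrow> real \<Rightarrow> real" where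
  "dI q v = max 0 (max (- real q / (real q + 1) - v) (v - 1 / (real q + 1)))"

lemma dI_lip: "dI q x \<le> dI q y + \<bar>x - y\<bar>"
  unfolding dI_def by (auto simp: max_def)

lemma dI_nonneg: "0 \<le> dI q x" unfolding dI_def by simp

lemma dI_zero: "dI q v \<le> 0 \<Longrightarrow> inI q v"
  unfolding dI_def inI_def by (auto simp: max_def split: if_splits)

lemma dI_in: "inI q v \<Longrightarrow> dI q v = 0"
  unfolding dI_def inI_def by (auto simp: max_def)

lemma clamp_ex:
  assumes "q > 3"
  shows "\<exists>c. inI q c \<and> \<bar>v - c\<bar> = dI q v"
proof -
  have lh: "- real q / (real q + 1) \<le> 1 / (real q + 1)"
    using assms by (intro divide_right_mono) auto
  define c where "c = max (- real q / (real q + 1)) (min (1 / (real q + 1)) v)"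
  have "inI q c" unfolding c_def inI_def using lh by auto
  moreover have "\<bar>v - c\<bar> = dI q v" unfolding c_def dI_def using lh by (auto simp: max_def min_def)
  ultimately show ?thesis by blast
qed

lemma dI_B:
  assumes "q > 3" "u \<le> q - 1" "1 \<le> al" "al \<le> q - 1"
  shows "dI q (B q u al v) \<le> dI q v / real q"
proof -
  obtain c where c: "inI q c" "\<bar>v - c\<bar> = dI q v" using clamp_ex[OF assms(1)] by blast
  have z: "dI q (B q u al c) = 0" using dI_in B_I[OF assms c(1)] by simp
  have "B q u al v - B q u al c = ((real al - real u - pI q u + v) - (real al - real u - pI q u + c)) / (- real q) ^ al"
    unfolding B_def diff_divide_distrib by simp
  then have "B q u al v - B q u al c = (v - c) / (- real q) ^ al" by simp
  then have "\<bar>B q u al v - B q u al c\<bar> = \<bar>v - c\<bar> / real q ^ al" by (simp add: power_abs)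
  also have "\<dots> \<le> \<bar>v - c\<bar> / real q ^ 1"
    using assms by (intro divide_left_mono power_increasing) auto
  finally have "\<bar>B q u al v - B q u al c\<bar> \<le> dI q v / real q" using c by simp
  then show ?thesis using dI_lip[of q "B q u al v" "B q u al c"] z by linarith
qed

lemma xval_crude:
  assumes "adm q u a" "q > 3" "u \<le> q - 1"
  shows "\<bar>xval q u a\<bar> \<le> 2 * real q + 1"
proof -
  have q: "real q \<ge> 4" using assms by simp
  have sg: "summable (\<lambda>n. real q * (1 / real q) ^ n)"
    using assms by (intro summable_mult summable_geometric) auto
  have sa: "summable (\<lambda>n. norm (Yv q u a n))"
    by (rule summable_comparison_test[OF _ sg]) (use Yv_bound[OF assms] in auto)
  have "\<bar>suminf (Yv q u a)\<bar> \<le> (\<Sum>n. norm (Yv q u a n))" using summable_norm[OF sa] by simp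
  also have "\<dots> \<le> (\<Sum>n. real q * (1 / real q) ^ n)"
    by (rule suminf_le[OF _ sa sg]) (use Yv_bound[OF assms] in auto)
  also have "\<dots> = real q * (1 / (1 - 1 / real q))"
    using q by (simp add: suminf_mult suminf_geometric)
  also have "\<dots> \<le> 2 * real q" using q by (simp add: field_simps)
  finally have "\<bar>suminf (Yv q u a)\<bar> \<le> 2 * real q" .
  moreover have "\<bar>- real u / (real q + 1)\<bar> \<le> 1"
    using assms by (simp add: divide_le_eq)
  ultimately show ?thesis unfolding xval_Yv by linarith
qed

lemma xval_I:
  assumes "adm q u a" "q > 3" "u \<le> q - 1"
  shows "inI q (xval q u a)"
proof -
  have q: "real q \<ge> 4" using assms by simp
  have key: "\<And>a. adm q u a \<Longrightarrow> dI q (xval q u a) \<le> (2 * real q + 2) / real q ^ m" for m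
  proof (induction m)
    case 0
    have "inI q 0" unfolding inI_def by simp
    then have "dI q 0 = 0" by (rule dI_in)
    then show ?case using xval_crude[OF 0 assms(2,3)] dI_lip[of q "xval q u a" 0] by simp
  next
    case (Suc m)
    have a0: "1 \<le> a 0" "a 0 \<le> q - 1" using Suc.prems unfolding adm_def by auto
    have "dI q (xval q u a) \<le> dI q (xval q u (\<lambda>n. a (Suc n))) / real q"
      using xval_recB[OF Suc.prems assms(2,3)] dI_B[OF assms(2,3) a0] by simp
    also have "\<dots> \<le> (2 * real q + 2) / real q ^ m / real q"
      by (rule divide_right_mono[OF Suc.IH[OF adm_sh[OF Suc.prems]]]) simp
    finally show ?case by (simp add: divide_divide_eq_left mult.commute)
  qed
  have "dI q (xval q u a) \<le> 0"
    by (rule LIMSEQ_le_const[OF LIMSEQ_divide_realpow_zero[of "real q" "2 * real q + 2"]])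
      (use q key[OF assms(1)] in auto)
  then show ?thesis by (rule dI_zero)
qed




lemma inI_mul: "q > 3 \<Longrightarrow> inI q v \<longleftrightarrow> - real q \<le> v * (real q + 1) \<and> v * (real q + 1) \<le> 1"
  unfolding inI_def by (auto simp: field_simps)

lemma inI_b: "q > 3 \<Longrightarrow> inI q v \<Longrightarrow> -1 < v \<and> v < 1"
proof -
  assume q: "q > 3" and v: "inI q v"
  have "1 / (real q + 1) < 1" using q by (simp add: divide_less_eq)
  moreover have "-1 < - real q / (real q + 1)" using q by (simp add: less_divide_eq)
  ultimately show ?thesis using v unfolding inI_def by linarith
qed

lemma sig_gt_lo:
  assumes "q > 3" "d * (real q + 1) + v * (real q + 1) < real q * real q"
  shows "- real q / (real q + 1) < sig q d v"
  using assms unfolding sig_def by (auto simp: field_simps)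

lemma sig_lt_hi:
  assumes "q > 3" "- real q < d * (real q + 1) + v * (real q + 1)"
  shows "sig q d v < 1 / (real q + 1)"
  using assms unfolding sig_def by (auto simp: field_simps)

lemma sig_neg:
  assumes "q > 3" "0 < d + v"
  shows "sig q d v < 0"
  using assms unfolding sig_def by (auto simp: field_simps)

lemma xval_strict:
  assumes "adm q u a" "q > 3" "u \<le> q - 1"
  shows "- real q / (real q + 1) < xval q u a \<and> xval q u a < 1 / (real q + 1)"
proof -
  have q: "real q \<ge> 4" using assms by simp
  have qq: "4 * real q \<le> real q * real q" using q by (intro mult_right_mono) auto
  have um: "real u * (real q + 1) \<le> (real q - 2) * (real q + 1)" if "real u \<le> real q - 2"
    using that q by (intro mult_right_mono) auto
  have um2: "1 * (real q + 1) \<le> real u * (real q + 1)" if "real u \<ge> 1"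
    using that q by (intro mult_right_mono) auto
  define v where "v = xval q u (\<lambda>n. a (Suc n))"
  have vI: "inI q v" unfolding v_def by (rule xval_I[OF adm_sh[OF assms(1)] assms(2,3)])
  then have vm: "- real q \<le> v * (real q + 1)" "v * (real q + 1) \<le> 1"
    using inI_mul[OF assms(2)] by auto
  define al where "al = a 0"
  have al: "1 \<le> al" "al \<le> q - 1" "al \<noteq> u" using assms(1) unfolding adm_def al_def by auto
  have x: "xval q u a = G q u (al - 1) (sig q (real al) v)"
    using xval_recB[OF assms] B_G[OF al(1)] assms unfolding v_def al_def by simp
  have alq: "real al \<le> real q - 1" using al by linarith
  have uq: "real u \<le> real q - 1" using assms by linarith
  show ?thesis
  proof (cases "al = 1")
    case True
    then have x1: "xval q u a = sig q 1 v" using x by (simp add: G_def)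
    have "- real q / (real q + 1) < sig q 1 v"
      by (rule sig_gt_lo[OF assms(2)]) (use vm q qq in \<open>simp only: distrib_left distrib_right mult_1_left mult_1_right mult_zero_left; linarith\<close>)
    moreover have "sig q 1 v < 1 / (real q + 1)"
      by (rule sig_lt_hi[OF assms(2)]) (use vm q in \<open>simp only: distrib_left distrib_right mult_1_left mult_1_right mult_zero_left; linarith\<close>)
    ultimately show ?thesis using x1 by simp
  next
    case False
    then have al2: "al \<ge> 2" using al by simp
    define v' where "v' = G q u (al - 2) (sig q (real al) v)"
    have v'I: "inI q v'" unfolding v'_def
      by (rule G_I[OF assms(2,3) sig_I[OF assms(2) _ alq vI]]) simp
    have x2: "xval q u a = sig q (real u) v'"
      using x sig_u_G[of q u "al - 2" "sig q (real al) v"] al2 assms(2) unfolding v'_def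
      by (simp add: Suc_diff_Suc numeral_2_eq_2)
    have v'm: "- real q \<le> v' * (real q + 1)" "v' * (real q + 1) \<le> 1"
      using v'I inI_mul[OF assms(2)] by auto
    have lo: "u = 0 \<Longrightarrow> - real q / (real q + 1) < v'"
    proof -
      assume u0: "u = 0"
      show ?thesis
      proof (cases "al = 2")
        case True
        then have "v' = sig q 2 v" unfolding v'_def by (simp add: G_def)
        moreover have "- real q / (real q + 1) < sig q 2 v"
          by (rule sig_gt_lo[OF assms(2)]) (use vm q qq in \<open>simp only: distrib_left distrib_right mult_1_left mult_1_right mult_zero_left; linarith\<close>)
        ultimately show ?thesis by simp
      next
        case False
        define w where "w = G q u (al - 3) (sig q (real al) v)"
        have wI: "inI q w" unfolding w_def
          by (rule G_I[OF assms(2,3) sig_I[OF assms(2) _ alq vI]]) simp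
        have "v' = sig q (real u) w"
          using sig_u_G[of q u "al - 3" "sig q (real al) v"] False al2 assms(2) unfolding v'_def w_def
          by (simp add: Suc_diff_Suc numeral_3_eq_3 numeral_2_eq_2)
        moreover have "- real q / (real q + 1) < sig q (real u) w"
          by (rule sig_gt_lo[OF assms(2)]) (use wI q qq u0 in \<open>simp add: inI_mul[OF assms(2)]; linarith\<close>)
        ultimately show ?thesis by simp
      qed
    qed
    have hi: "u = q - 1 \<Longrightarrow> v' < 1 / (real q + 1)"
    proof -
      assume u1: "u = q - 1"
      then have ur: "real u = real q - 1" using assms by simp
      show ?thesis
      proof (cases "al = 2")
        case True
        then have "v' = sig q 2 v" unfolding v'_def by (simp add: G_def)
        moreover have "sig q 2 v < 0"
          by (rule sig_neg[OF assms(2)]) (use conjunct1[OF inI_b[OF assms(2) vI]] in linarith)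
        moreover have "0 < 1 / (real q + 1)" by simp
        ultimately show ?thesis by linarith
      next
        case False
        define w where "w = G q u (al - 3) (sig q (real al) v)"
        have wI: "inI q w" unfolding w_def
          by (rule G_I[OF assms(2,3) sig_I[OF assms(2) _ alq vI]]) simp
        have "v' = sig q (real u) w"
          using sig_u_G[of q u "al - 3" "sig q (real al) v"] False al2 assms(2) unfolding v'_def w_def
          by (simp add: Suc_diff_Suc numeral_3_eq_3 numeral_2_eq_2)
        moreover have "sig q (real u) w < 0"
          by (rule sig_neg[OF assms(2)]) (use conjunct1[OF inI_b[OF assms(2) wI]] q ur in linarith)
        moreover have "0 < 1 / (real q + 1)" by simp
        ultimately show ?thesis by linarith
      qed
    qed
    have hi': "v' * (real q + 1) < 1" if "u = q - 1"
    proof -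
      have h: "v' < 1 / (real q + 1)" by (rule hi[OF that])
      have "v' * (real q + 1) < (1 / (real q + 1)) * (real q + 1)"
        by (rule mult_strict_right_mono[OF h]) simp
      then show ?thesis by simp
    qed
    have lo': "- real q < v' * (real q + 1)" if "u = 0"
    proof -
      have h: "- real q / (real q + 1) < v'" by (rule lo[OF that])
      have "(- real q / (real q + 1)) * (real q + 1) < v' * (real q + 1)"
        by (rule mult_strict_right_mono[OF h]) simp
      then show ?thesis by simp
    qed
    have A: "- real q / (real q + 1) < sig q (real u) v'"
    proof (cases "u = q - 1")
      case True then show ?thesis using hi
        by (intro sig_gt_lo[OF assms(2)]) (use v'm q uq hi' in \<open>simp add: algebra_simps\<close>)
    next
      case False
      then have "real u \<le> real q - 2" using assms by linarith
      then show ?thesis by (intro sig_gt_lo[OF assms(2)]) (use v'm q um[OF \<open>real u \<le> real q - 2\<close>] in \<open>simp add: algebra_simps\<close>)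
    qed
    have Bb: "sig q (real u) v' < 1 / (real q + 1)"
    proof (cases "u = 0")
      case True then show ?thesis using lo
        by (intro sig_lt_hi[OF assms(2)]) (use lo' in simp)
    next
      case False
      then have "real u \<ge> 1" by simp
      then show ?thesis by (intro sig_lt_hi[OF assms(2)]) (use v'm q um2[OF \<open>real u \<ge> 1\<close>] in \<open>simp only: distrib_left distrib_right mult_1_left mult_1_right mult_zero_left; linarith\<close>)
    qed
    show ?thesis using A Bb x2 by simp
  qed
qed



lemma iter:
  assumes "q > 3" "u \<le> q - 1"
  shows "adm q u a \<Longrightarrow> adm q u b \<Longrightarrow> (\<forall>k<m. a k = b k) \<Longrightarrow>
    xval q u b - xval q u a = (xval q u (\<lambda>n. b (n + m)) - xval q u (\<lambda>n. a (n + m))) / (- real q) ^ (\<Sum>k<m. a k)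
    \<and> negaq q b - negaq q a = (negaq q (\<lambda>n. b (n + m)) - negaq q (\<lambda>n. a (n + m))) / (- real q) ^ m"
proof (induction m arbitrary: a b)
  case 0 then show ?case by simp
next
  case (Suc m)
  have e0: "a 0 = b 0" using Suc.prems by auto
  have IH: "xval q u (\<lambda>n. b (Suc n)) - xval q u (\<lambda>n. a (Suc n)) =
      (xval q u (\<lambda>n. b (n + Suc m)) - xval q u (\<lambda>n. a (n + Suc m))) / (- real q) ^ (\<Sum>k<m. a (Suc k))
    \<and> negaq q (\<lambda>n. b (Suc n)) - negaq q (\<lambda>n. a (Suc n)) =
      (negaq q (\<lambda>n. b (n + Suc m)) - negaq q (\<lambda>n. a (n + Suc m))) / (- real q) ^ m"
    using Suc.IH[OF adm_sh[OF Suc.prems(1)] adm_sh[OF Suc.prems(2)]] Suc.prems(3) by simp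
  have x: "xval q u b - xval q u a = (xval q u (\<lambda>n. b (Suc n)) - xval q u (\<lambda>n. a (Suc n))) / (- real q) ^ (a 0)"
    unfolding xval_recB[OF Suc.prems(2) assms] xval_recB[OF Suc.prems(1) assms] e0 B_def
    by (simp add: diff_divide_distrib[symmetric])
  have N: "negaq q b - negaq q a = (negaq q (\<lambda>n. b (Suc n)) - negaq q (\<lambda>n. a (Suc n))) / (- real q)"
    unfolding negaq_rec[OF Suc.prems(2) assms(1)] negaq_rec[OF Suc.prems(1) assms(1)] e0
    using assms(1) by (simp add: field_simps)
  have s: "(\<Sum>k<Suc m. a k) = a 0 + (\<Sum>k<m. a (Suc k))" by (simp only: sum.lessThan_Suc_shift)
  have c1: "xval q u b - xval q u a = (xval q u (\<lambda>n. b (n + Suc m)) - xval q u (\<lambda>n. a (n + Suc m))) / (- real q) ^ (\<Sum>k<Suc m. a k)"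
    unfolding s power_add x using IH by (simp only: divide_divide_eq_left mult.commute)
  have c2: "negaq q b - negaq q a = (negaq q (\<lambda>n. b (n + Suc m)) - negaq q (\<lambda>n. a (n + Suc m))) / (- real q) ^ Suc m"
    unfolding power_Suc N using IH by (simp only: divide_divide_eq_left mult.commute)
  show ?case using c1 c2 by blast
qed

lemma G_inj: "q > 0 \<Longrightarrow> G q u k w1 = G q u k w2 \<Longrightarrow> w1 = w2"
  unfolding G_def by simp

lemma first_diff:
  assumes "q > 3" "u \<le> q - 1" "adm q u c" "adm q u d" "c 0 < d 0"
  shows "xval q u c \<noteq> xval q u d"
proof
  assume eq: "xval q u c = xval q u d"
  define al where "al = c 0"
  define be where "be = d 0"
  define y1 where "y1 = xval q u (\<lambda>n. c (Suc n))"
  define y2 where "y2 = xval q u (\<lambda>n. d (Suc n))"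
  have al: "1 \<le> al" "al \<noteq> u" using assms(3) unfolding adm_def al_def by auto
  have be: "1 \<le> be" "be \<le> q - 1" using assms(4) unfolding adm_def be_def by auto
  have ab: "al < be" using assms(5) unfolding al_def be_def .
  have beq: "real be \<le> real q - 1" using be by linarith
  have y1s: "- real q / (real q + 1) < y1 \<and> y1 < 1 / (real q + 1)"
    unfolding y1_def by (rule xval_strict[OF adm_sh[OF assms(3)] assms(1,2)])
  have y2I: "inI q y2" unfolding y2_def by (rule xval_I[OF adm_sh[OF assms(4)] assms(1,2)])
  have xc: "xval q u c = G q u (al - 1) (sig q (real al) y1)"
    using xval_recB[OF assms(3) assms(1,2)] B_G[OF al(1)] assms(1) unfolding y1_def al_def by simp
  have "xval q u d = G q u (be - 1) (sig q (real be) y2)"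
    using xval_recB[OF assms(4) assms(1,2)] B_G[OF be(1)] assms(1) unfolding y2_def be_def by simp
  also have "be - 1 = (al - 1) + Suc (be - al - 1)" using ab al by simp
  finally have xd0: "xval q u d = G q u (al - 1) (G q u (Suc (be - al - 1)) (sig q (real be) y2))"
    unfolding G_add .
  have gs: "G q u (Suc (be - al - 1)) (sig q (real be) y2) = sig q (real u) (G q u (be - al - 1) (sig q (real be) y2))"
    using sig_u_G[of q u "be - al - 1" "sig q (real be) y2"] assms(1) by simp
  have xd: "xval q u d = G q u (al - 1) (sig q (real u) (G q u (be - al - 1) (sig q (real be) y2)))"
    using xd0 unfolding gs .
  define W where "W = G q u (be - al - 1) (sig q (real be) y2)"
  have WI: "inI q W" unfolding W_def
    by (rule G_I[OF assms(1,2) sig_I[OF assms(1) _ beq y2I]]) simp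
  have "sig q (real al) y1 = sig q (real u) W"
    using G_inj[of q u "al - 1"] eq xc xd assms(1) unfolding W_def by simp
  then have e: "real al + y1 = real u + W" unfolding sig_def using assms(1) by simp
  have h: "1 - real q / (real q + 1) = 1 / (real q + 1)"
    by (simp add: field_simps)
  show False
  proof (cases "al < u")
    case True
    then have "real al + 1 \<le> real u" by linarith
    then show False using e WI y1s h unfolding inI_def by linarith
  next
    case False
    then have "real u + 1 \<le> real al" using al by linarith
    then show False using e WI y1s h unfolding inI_def by linarith
  qed
qed

lemma xval_inj:
  assumes "q > 3" "u \<le> q - 1" "adm q u a" "adm q u b" "xval q u a = xval q u b"
  shows "a = b"
proof (rule ccontr)
  assume "a \<noteq> b"
  then have ex: "\<exists>n. a n \<noteq> b n" by auto
  define m where "m = (LEAST n. a n \<noteq> b n)"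
  have am: "a m \<noteq> b m" unfolding m_def by (rule LeastI_ex[OF ex])
  have below: "\<forall>k<m. a k = b k" unfolding m_def using not_less_Least by blast
  have "xval q u b - xval q u a = (xval q u (\<lambda>n. b (n + m)) - xval q u (\<lambda>n. a (n + m))) / (- real q) ^ (\<Sum>k<m. a k)"
    using iter[OF assms(1,2,3,4) below] by simp
  then have e: "xval q u (\<lambda>n. b (n + m)) = xval q u (\<lambda>n. a (n + m))"
    using assms(1,5) by simp
  have A: "adm q u (\<lambda>n. a (n + m))" "adm q u (\<lambda>n. b (n + m))" using adm_shm assms(3,4) by auto
  show False
  proof (cases "a m < b m")
    case True
    then show False using first_diff[OF assms(1,2) A] e by simp
  next
    case False
    then have "b m < a m" using am by simp
    then show False using first_diff[OF assms(1,2) A(2,1)] e by simp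
  qed
qed

lemma h_val:
  assumes "q > 3" "u \<le> q - 1" "adm q u a"
  shows "h q u (xval q u a) = negaq q a"
proof -
  have ex: "\<exists>c. c \<in> adm_seqs q u \<and> xval q u c = xval q u a"
    using assms(3) adm_seqs_iff by blast
  define c where "c = (SOME c. c \<in> adm_seqs q u \<and> xval q u c = xval q u a)"
  have c: "c \<in> adm_seqs q u \<and> xval q u c = xval q u a" unfolding c_def by (rule someI_ex[OF ex])
  then have "c = a" using xval_inj[OF assms(1,2) _ assms(3)] adm_seqs_iff by blast
  then show ?thesis unfolding h_def c_def[symmetric] by simp
qed



lemma I_diff: "inI q x \<Longrightarrow> inI q y \<Longrightarrow> \<bar>x - y\<bar> \<le> 1"
proof -
  assume "inI q x" "inI q y"
  moreover have "1 / (real q + 1) - (- real q / (real q + 1)) = 1" by (simp add: field_simps)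
  ultimately show ?thesis unfolding inI_def by linarith
qed

lemma sum_lt_ge: "adm q u a \<Longrightarrow> m \<le> (\<Sum>k<m. a k)"
proof (induction m)
  case 0 then show ?case by simp
next
  case (Suc m)
  have "1 \<le> a m" using Suc.prems unfolding adm_def by auto
  then show ?case using Suc by simp
qed

lemma dist_agree:
  assumes "q > 3" "u \<le> q - 1" "adm q u a" "adm q u b" "\<forall>k<m. a k = b k"
  shows "\<bar>xval q u b - xval q u a\<bar> \<le> 1 / real q ^ m"
proof -
  have e: "xval q u b - xval q u a = (xval q u (\<lambda>n. b (n + m)) - xval q u (\<lambda>n. a (n + m))) / (- real q) ^ (\<Sum>k<m. a k)"
    using iter[OF assms(1,2,3,4,5)] by simp
  have d: "\<bar>xval q u (\<lambda>n. b (n + m)) - xval q u (\<lambda>n. a (n + m))\<bar> \<le> 1"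
    by (rule I_diff; rule xval_I[OF adm_shm assms(1,2)]) (use assms in auto)
  have p: "real q ^ m \<le> real q ^ (\<Sum>k<m. a k)"
    using sum_lt_ge[OF assms(3)] assms(1) by (intro power_increasing) auto
  have "\<bar>xval q u b - xval q u a\<bar> = \<bar>xval q u (\<lambda>n. b (n + m)) - xval q u (\<lambda>n. a (n + m))\<bar> / real q ^ (\<Sum>k<m. a k)"
    unfolding e by (simp add: power_abs)
  also have "\<dots> \<le> 1 / real q ^ m"
    using d p assms(1) by (intro frac_le) auto
  finally show ?thesis .
qed

lemma adm_upd: "adm q u a \<Longrightarrow> 1 \<le> be \<Longrightarrow> be \<le> q - 1 \<Longrightarrow> be \<noteq> u \<Longrightarrow> adm q u (a(m := be))"
  unfolding adm_def by auto

lemma seq_conv: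
  assumes "q > 3" "\<And>k. \<bar>X k - x0\<bar> \<le> 1 / real q ^ k"
  shows "X \<longlonglongrightarrow> x0"
proof -
  have "(\<lambda>k. X k - x0) \<longlonglongrightarrow> 0"
  proof (rule Lim_null_comparison)
    show "\<forall>\<^sub>F k in sequentially. norm (X k - x0) \<le> 1 / real q ^ k" using assms(2) by simp
    show "(\<lambda>k. 1 / real q ^ k) \<longlonglongrightarrow> 0" by (rule LIMSEQ_divide_realpow_zero) (use assms in simp)
  qed
  then have "(\<lambda>k. x0 + (X k - x0)) \<longlonglongrightarrow> x0 + 0" by (intro tendsto_add tendsto_const)
  then show ?thesis by simp
qed



lemma negaq_single:
  assumes "q > 3" "adm q u a" "adm q u c" "\<forall>n. c (Suc n) = a (Suc n)"
  shows "negaq q c - negaq q a = (real (c 0) - real (a 0)) / (- real q)"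
proof -
  have e: "(\<lambda>n. c (Suc n)) = (\<lambda>n. a (Suc n))" using assms(4) by auto
  show ?thesis unfolding negaq_rec[OF assms(3,1)] negaq_rec[OF assms(2,1)] e
    using assms(1) by (simp add: field_simps)
qed

lemma caseA:
  assumes q3: "q > 3" and uq: "u \<le> q - 1" and a: "adm q u a"
    and Sm: "\<And>bb. (\<And>k. adm q u (bb k)) \<Longrightarrow> (\<And>k. bb k \<noteq> a) \<Longrightarrow>
        (\<And>k. \<bar>xval q u (bb k) - xval q u a\<bar> \<le> 1 / real q ^ k) \<Longrightarrow>
        (\<lambda>k. (negaq q (bb k) - negaq q a) / (xval q u (bb k) - xval q u a)) \<longlonglongrightarrow> L"
    and unb: "\<forall>M. \<exists>m. m + M < (\<Sum>k<m. a k)"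
  shows False
proof -
  have q: "real q \<ge> 4" using q3 by simp
  have "\<forall>m. \<exists>be. 1 \<le> be \<and> be \<le> q - 1 \<and> be \<noteq> u \<and> be \<noteq> a m"
  proof
    fix m
    have "\<exists>be\<in>{1,2,3::nat}. be \<noteq> u \<and> be \<noteq> a m" by auto
    then obtain b where "b \<in> {1,2,3}" "b \<noteq> u" "b \<noteq> a m" by blast
    then show "\<exists>be. 1 \<le> be \<and> be \<le> q - 1 \<and> be \<noteq> u \<and> be \<noteq> a m" using q3
      by (intro exI[of _ b]) auto
  qed
  then obtain be where be: "\<And>m. 1 \<le> be m \<and> be m \<le> q - 1 \<and> be m \<noteq> u \<and> be m \<noteq> a m" by metis
  define bb where "bb m = a(m := be m)" for m
  have adb: "adm q u (bb m)" for m unfolding bb_def using adm_upd[OF a] be by auto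
  have agr: "\<forall>k<m. a k = bb m k" for m unfolding bb_def by auto
  have neq: "bb m \<noteq> a" for m using be[of m] unfolding bb_def by (metis fun_upd_same)
  define Q where "Q k = (negaq q (bb k) - negaq q a) / (xval q u (bb k) - xval q u a)" for k
  have lim: "Q \<longlonglongrightarrow> L" unfolding Q_def
    by (rule Sm[OF adb neq dist_agree[OF q3 uq a adb agr]])
  obtain K where K: "0 < K" "\<And>k. norm (Q k) \<le> K"
    using convergent_imp_Bseq[OF convergentI[OF lim]] BseqE by metis
  define M where "M = nat \<lceil>K\<rceil>"
  obtain m where mP: "m + M < (\<Sum>k<m. a k)" using unb by blast
  define P where "P = (\<Sum>k<m. a k)"
  have it: "xval q u (bb m) - xval q u a = (xval q u (\<lambda>n. bb m (n + m)) - xval q u (\<lambda>n. a (n + m))) / (- real q) ^ P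
     \<and> negaq q (bb m) - negaq q a = (negaq q (\<lambda>n. bb m (n + m)) - negaq q (\<lambda>n. a (n + m))) / (- real q) ^ m"
    unfolding P_def using iter[OF q3 uq a adb agr] .
  have ns: "negaq q (\<lambda>n. bb m (n + m)) - negaq q (\<lambda>n. a (n + m)) = (real (be m) - real (a m)) / (- real q)"
    using negaq_single[OF q3 adm_shm[OF a, of m] adm_shm[OF adb[of m], of m]] unfolding bb_def by simp
  have dN: "\<bar>negaq q (bb m) - negaq q a\<bar> \<ge> 1 / real q ^ Suc m"
  proof -
    have "1 \<le> \<bar>real (be m) - real (a m)\<bar>" using be[of m] by linarith
    then have "1 / real q ^ Suc m \<le> \<bar>real (be m) - real (a m)\<bar> / real q ^ Suc m"
      by (intro divide_right_mono) auto
    also have "\<dots> = \<bar>negaq q (bb m) - negaq q a\<bar>"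
      using it ns by (simp add: power_abs abs_divide abs_mult mult.commute)
    finally show ?thesis .
  qed
  define D where "D = xval q u (\<lambda>n. bb m (n + m)) - xval q u (\<lambda>n. a (n + m))"
  have Dle: "\<bar>D\<bar> \<le> 1" unfolding D_def
    by (rule I_diff; rule xval_I[OF adm_shm q3 uq]) (use a adb in auto)
  have xne: "xval q u (bb m) - xval q u a \<noteq> 0"
    using xval_inj[OF q3 uq a adb[of m]] neq[of m] by auto
  have dX: "\<bar>xval q u (bb m) - xval q u a\<bar> \<le> 1 / real q ^ P"
  proof -
    have "\<bar>xval q u (bb m) - xval q u a\<bar> = \<bar>D\<bar> / real q ^ P" using it unfolding D_def by (simp add: power_abs)
    also have "\<dots> \<le> 1 / real q ^ P" using Dle by (intro divide_right_mono) auto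
    finally show ?thesis .
  qed
  have "(1 / real q ^ Suc m) / (1 / real q ^ P) \<le> \<bar>negaq q (bb m) - negaq q a\<bar> / \<bar>xval q u (bb m) - xval q u a\<bar>"
    by (rule frac_le) (use dN dX xne q in auto)
  also have "\<dots> = norm (Q m)" unfolding Q_def by (simp add: abs_divide)
  finally have Qge: "(1 / real q ^ Suc m) / (1 / real q ^ P) \<le> norm (Q m)" .
  have "(1 / real q ^ Suc m) / (1 / real q ^ P) = real q ^ (P - Suc m)"
    using mP q unfolding P_def by (simp add: power_diff)
  also have "real q ^ (P - Suc m) \<ge> real q ^ M"
    using mP q unfolding P_def by (intro power_increasing) auto
  moreover have "real q ^ M \<ge> 2 ^ M" using q by (intro power_mono) auto
  moreover have "real M < 2 ^ M"
  proof -
    have "M < 2 ^ M" by simp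
    then have "real M < real (2 ^ M)" by linarith
    then show ?thesis by simp
  qed
  moreover have "K \<le> real M" unfolding M_def by linarith
  ultimately show False using Qge K(2)[of m] by linarith
qed



lemma ratio_alg:
  fixes z A D :: real
  assumes "z \<noteq> 0" "D \<noteq> 0"
  shows "(A / z ^ m) / (D / z ^ (m + C)) = z ^ C * A / D"
  using assms by (simp add: power_add field_simps)

lemma caseB:
  assumes q3: "q > 3" and uq: "u \<le> q - 1" and a: "adm q u a"
    and Sm: "\<And>bb. (\<And>k. adm q u (bb k)) \<Longrightarrow> (\<And>k. bb k \<noteq> a) \<Longrightarrow>
        (\<And>k. \<bar>xval q u (bb k) - xval q u a\<bar> \<le> 1 / real q ^ k) \<Longrightarrow>
        (\<lambda>k. (negaq q (bb k) - negaq q a) / (xval q u (bb k) - xval q u a)) \<longlonglongrightarrow> L"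
    and bnd: "\<forall>m. (\<Sum>k<m. a k) \<le> m + M"
  shows False
proof -
  have q: "real q \<ge> 4" using q3 by simp
  define c where "c m = (\<Sum>k<m. a k) - m" for m
  have Pge: "m \<le> (\<Sum>k<m. a k)" for m using sum_lt_ge[OF a] .
  have cmono: "c m \<le> c (Suc m)" for m
  proof -
    have "1 \<le> a m" using a unfolding adm_def by auto
    then show ?thesis unfolding c_def using Pge[of m] by simp
  qed
  have fin: "finite (range c)"
  proof (rule finite_subset[of _ "{..M}"])
    show "range c \<subseteq> {..M}"
    proof
      fix x assume "x \<in> range c"
      then obtain m where "x = c m" by blast
      moreover have "(\<Sum>k<m. a k) \<le> m + M" using bnd by blast
      ultimately show "x \<in> {..M}" unfolding c_def by simp
    qed
  qed simp
  obtain n0 where n0: "c n0 = Max (range c)"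
    using Max_in[OF fin] by auto
  have cle: "c m \<le> c n0" for m using Max_ge[OF fin, of "c m"] n0 by auto
  have ceq: "c m = c n0" if "n0 \<le> m" for m
    using lift_Suc_mono_le[of c, OF cmono that] cle[of m] by simp
  have a1: "a m = 1" if "n0 \<le> m" for m
  proof -
    have "c (Suc m) = c m" using ceq[of m] ceq[of "Suc m"] that by simp
    moreover have "(\<Sum>k<Suc m. a k) = (\<Sum>k<m. a k) + a m" by simp
    moreover have "1 \<le> a m" using a unfolding adm_def by auto
    ultimately show ?thesis unfolding c_def using Pge[of m] by linarith
  qed
  define Cst where "Cst = c n0"
  have Peq: "(\<Sum>k<m. a k) = m + Cst" if "n0 \<le> m" for m
    using ceq[OF that] Pge[of m] unfolding c_def Cst_def by simp
  have u1: "u \<noteq> 1" using a a1[of n0] unfolding adm_def by auto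
  define be :: nat where "be = (if u = 2 then 3 else 2)"
  have be: "2 \<le> be" "be \<le> 3" "be \<noteq> u" "be \<le> q - 1" "be \<noteq> 1" using q3 unfolding be_def by auto
  define O0 :: "nat \<Rightarrow> nat" where "O0 = (\<lambda>_. 1)"
  define O1 where "O1 = O0(0 := be)"
  define O2 where "O2 = O0(0 := be, 1 := be)"
  have aO0: "adm q u O0" unfolding O0_def adm_def using u1 q3 by auto
  have aO1: "adm q u O1" unfolding O1_def by (rule adm_upd[OF aO0]) (use be in auto)
  have aO2: "adm q u O2" unfolding O2_def by (rule adm_upd[OF adm_upd[OF aO0]]) (use be in auto)
  have shA: "(\<lambda>n. a (n + m)) = O0" if "n0 \<le> m" for m
    using a1 that unfolding O0_def by auto
  define b1 where "b1 k = a(n0 + k := be)" for k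
  define b2 where "b2 k = a(n0 + k := be, Suc (n0 + k) := be)" for k
  have sh1: "(\<lambda>n. b1 k (n + (n0 + k))) = O1" for k
    using a1 unfolding b1_def O1_def O0_def by auto
  have sh2: "(\<lambda>n. b2 k (n + (n0 + k))) = O2" for k
  proof
    fix n show "b2 k (n + (n0 + k)) = O2 n"
      using a1[of "n + (n0 + k)"] unfolding b2_def O2_def O0_def by auto
  qed
  have ab1: "adm q u (b1 k)" for k unfolding b1_def by (rule adm_upd[OF a]) (use be in auto)
  have ab2: "adm q u (b2 k)" for k unfolding b2_def by (rule adm_upd[OF adm_upd[OF a]]) (use be in auto)
  have ag1: "\<forall>j<n0 + k. a j = b1 k j" for k unfolding b1_def by auto
  have ag2: "\<forall>j<n0 + k. a j = b2 k j" for k unfolding b2_def by auto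
  have ne1: "b1 k \<noteq> a" for k
  proof
    assume "b1 k = a"
    then have "b1 k (n0 + k) = a (n0 + k)" by simp
    then show False using a1[of "n0 + k"] be unfolding b1_def by simp
  qed
  have ne2: "b2 k \<noteq> a" for k
  proof
    assume "b2 k = a"
    then have "b2 k (n0 + k) = a (n0 + k)" by simp
    then show False using a1[of "n0 + k"] be unfolding b2_def by simp
  qed
  have pw: "1 / real q ^ (n0 + k) \<le> 1 / real q ^ k" for k
    using q by (intro divide_left_mono power_increasing) auto
  have dd1: "\<bar>xval q u (b1 k) - xval q u a\<bar> \<le> 1 / real q ^ k" for k
    using dist_agree[OF q3 uq a ab1 ag1, of k] pw[of k] by linarith
  have dd2: "\<bar>xval q u (b2 k) - xval q u a\<bar> \<le> 1 / real q ^ k" for k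
    using dist_agree[OF q3 uq a ab2 ag2, of k] pw[of k] by linarith
  have L1: "(\<lambda>k. (negaq q (b1 k) - negaq q a) / (xval q u (b1 k) - xval q u a)) \<longlonglongrightarrow> L"
    by (rule Sm[OF ab1 ne1 dd1])
  have L2: "(\<lambda>k. (negaq q (b2 k) - negaq q a) / (xval q u (b2 k) - xval q u a)) \<longlonglongrightarrow> L"
    by (rule Sm[OF ab2 ne2 dd2])
  have zn: "- real q \<noteq> 0" using q by simp
  define D1 where "D1 = xval q u O1 - xval q u O0"
  define D2 where "D2 = xval q u O2 - xval q u O0"
  define N1 where "N1 = negaq q O1 - negaq q O0"
  define N2 where "N2 = negaq q O2 - negaq q O0"
  have O10: "O1 \<noteq> O0"
  proof
    assume "O1 = O0" then have "O1 0 = O0 0" by simp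
    then show False using be unfolding O1_def O0_def by simp
  qed
  have O20: "O2 \<noteq> O0"
  proof
    assume "O2 = O0" then have "O2 0 = O0 0" by simp
    then show False using be unfolding O2_def O0_def by simp
  qed
  have D1ne: "D1 \<noteq> 0" unfolding D1_def
    using xval_inj[OF q3 uq aO1 aO0] O10 by auto
  have D2ne: "D2 \<noteq> 0" unfolding D2_def
    using xval_inj[OF q3 uq aO2 aO0] O20 by auto
  have Q1: "(negaq q (b1 k) - negaq q a) / (xval q u (b1 k) - xval q u a) = (- real q) ^ Cst * N1 / D1" for k
  proof -
    have it: "xval q u (b1 k) - xval q u a = D1 / (- real q) ^ (n0 + k + Cst)
      \<and> negaq q (b1 k) - negaq q a = N1 / (- real q) ^ (n0 + k)"
      using iter[OF q3 uq a ab1 ag1, of k] Peq[of "n0 + k"] sh1[of k] shA[of "n0 + k"]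
      unfolding D1_def N1_def by simp
    show ?thesis unfolding it[THEN conjunct1] it[THEN conjunct2] by (rule ratio_alg[OF zn D1ne])
  qed
  have Q2: "(negaq q (b2 k) - negaq q a) / (xval q u (b2 k) - xval q u a) = (- real q) ^ Cst * N2 / D2" for k
  proof -
    have it: "xval q u (b2 k) - xval q u a = D2 / (- real q) ^ (n0 + k + Cst)
      \<and> negaq q (b2 k) - negaq q a = N2 / (- real q) ^ (n0 + k)"
      using iter[OF q3 uq a ab2 ag2, of k] Peq[of "n0 + k"] sh2[of k] shA[of "n0 + k"]
      unfolding D2_def N2_def by simp
    show ?thesis unfolding it[THEN conjunct1] it[THEN conjunct2] by (rule ratio_alg[OF zn D2ne])
  qed
  have "L = (- real q) ^ Cst * N1 / D1"
    using L1 unfolding Q1 by (rule LIMSEQ_unique[OF _ tendsto_const])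
  moreover have "L = (- real q) ^ Cst * N2 / D2"
    using L2 unfolding Q2 by (rule LIMSEQ_unique[OF _ tendsto_const])
  ultimately have "(- real q) ^ Cst * N1 / D1 = (- real q) ^ Cst * N2 / D2" by simp
  then have cross: "N1 * D2 = N2 * D1" using D1ne D2ne zn by (simp add: field_simps)
  have sO0: "(\<lambda>n. O0 (Suc n)) = O0" unfolding O0_def by simp
  have sO1: "(\<lambda>n. O1 (Suc n)) = O0" unfolding O1_def O0_def by simp
  have sO2: "(\<lambda>n. O2 (Suc n)) = O1" unfolding O2_def O1_def O0_def by auto
  define z :: real where "z = - real q"
  define lam where "lam = z ^ be"
  have lamne: "lam \<noteq> 0" unfolding lam_def z_def using q by simp
  have x1: "xval q u O1 = B q u be (xval q u O0)"
    using xval_recB[OF aO1 q3 uq] sO1 unfolding O1_def by simp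
  have x2: "xval q u O2 = B q u be (xval q u O1)"
    using xval_recB[OF aO2 q3 uq] sO2 unfolding O2_def by simp
  have D2eq: "D2 = D1 * (1 + 1 / lam)"
  proof -
    have "xval q u O2 - xval q u O1 = D1 / lam"
      unfolding x2 x1 D1_def lam_def z_def B_def by (simp add: diff_divide_distrib[symmetric] x1)
    then show ?thesis unfolding D2_def D1_def using lamne by (simp add: field_simps)
  qed
  have n0e: "negaq q O0 = (1 + negaq q O0) / z"
    using negaq_rec[OF aO0 q3] sO0 unfolding O0_def z_def by simp
  have n1e: "negaq q O1 = (real be + negaq q O0) / z"
    using negaq_rec[OF aO1 q3] sO1 unfolding O1_def z_def by simp
  have n2e: "negaq q O2 = (real be + negaq q O1) / z"
    using negaq_rec[OF aO2 q3] sO2 unfolding O2_def z_def by simp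
  have zne: "z \<noteq> 0" unfolding z_def using q by simp
  have N1e: "N1 = (real be - 1) / z"
    unfolding N1_def using n1e n0e zne by (simp add: field_simps)
  have N2e: "N2 = (real be - 1 + N1) / z"
    unfolding N2_def N1_def using n2e n0e zne by (simp add: field_simps)
  have bm: "real be - 1 \<noteq> 0" using be by simp
  have "(N1 * D1) * (1 + 1 / lam) = (N1 * D1) * (1 + 1 / z)"
    using cross unfolding D2eq N2e N1e using zne lamne by (simp add: field_simps)
  moreover have "N1 * D1 \<noteq> 0" using D1ne bm zne unfolding N1e by simp
  ultimately have "1 / lam = 1 / z" by simp
  then have "lam = z" by simp
  then have "\<bar>z\<bar> ^ be = \<bar>z\<bar>" unfolding lam_def by (simp add: power_abs[symmetric])
  moreover have "\<bar>z\<bar> ^ 2 \<le> \<bar>z\<bar> ^ be" using be q unfolding z_def by (intro power_increasing) auto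
  moreover have "\<bar>z\<bar> < \<bar>z\<bar> ^ 2" using q unfolding z_def by (simp add: power2_eq_square)
  ultimately show False by linarith
qed


theorem theorem3p1:
  fixes q u :: nat and x0 :: real
  assumes "q > 3" and "u \<le> q - 1" and "x0 \<in> Dh q u"
  shows "\<not> (\<exists>L::real. ((\<lambda>x. (h q u x - h q u x0) / (x - x0)) \<longlongrightarrow> L)
                         (at x0 within Dh q u))"
proof
  assume "\<exists>L::real. ((\<lambda>x. (h q u x - h q u x0) / (x - x0)) \<longlongrightarrow> L) (at x0 within Dh q u)"
  then obtain L where lim: "((\<lambda>x. (h q u x - h q u x0) / (x - x0)) \<longlongrightarrow> L) (at x0 within Dh q u)"
    by blast
  from assms(3) obtain a where a: "adm q u a" and x0: "x0 = xval q u a"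
    unfolding Dh_def using adm_seqs_iff by blast
  have Sm: "\<And>bb. (\<And>k. adm q u (bb k)) \<Longrightarrow> (\<And>k. bb k \<noteq> a) \<Longrightarrow>
        (\<And>k. \<bar>xval q u (bb k) - xval q u a\<bar> \<le> 1 / real q ^ k) \<Longrightarrow>
        (\<lambda>k. (negaq q (bb k) - negaq q a) / (xval q u (bb k) - xval q u a)) \<longlonglongrightarrow> L"
  proof -
    fix bb :: "nat \<Rightarrow> nat \<Rightarrow> nat"
    assume A: "\<And>k. adm q u (bb k)" and B: "\<And>k. bb k \<noteq> a"
      and C: "\<And>k. \<bar>xval q u (bb k) - xval q u a\<bar> \<le> 1 / real q ^ k"
    define X where "X k = xval q u (bb k)" for k
    have XD: "\<forall>i. X i \<in> Dh q u - {x0}"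
    proof
      fix i
      have "X i \<in> Dh q u" unfolding X_def Dh_def using A[of i] adm_seqs_iff by blast
      moreover have "X i \<noteq> x0" unfolding X_def x0 using xval_inj[OF assms(1,2) A[of i] a] B[of i] by auto
      ultimately show "X i \<in> Dh q u - {x0}" by simp
    qed
    have "X \<longlonglongrightarrow> x0" by (rule seq_conv[OF assms(1)]) (use C in \<open>simp add: X_def x0\<close>)
    then have "((\<lambda>x. (h q u x - h q u x0) / (x - x0)) \<circ> X) \<longlonglongrightarrow> L"
      using lim XD tendsto_at_iff_sequentially by blast
    moreover have "((\<lambda>x. (h q u x - h q u x0) / (x - x0)) \<circ> X) =
        (\<lambda>k. (negaq q (bb k) - negaq q a) / (xval q u (bb k) - xval q u a))"
      unfolding X_def x0 o_def using h_val[OF assms(1,2) A] h_val[OF assms(1,2) a] by simp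
    ultimately show "(\<lambda>k. (negaq q (bb k) - negaq q a) / (xval q u (bb k) - xval q u a)) \<longlonglongrightarrow> L"
      by simp
  qed
  show False
  proof (cases "\<exists>M. \<forall>m. (\<Sum>k<m. a k) \<le> m + M")
    case True
    then obtain M where "\<forall>m. (\<Sum>k<m. a k) \<le> m + M" by blast
    then show False using caseB[OF assms(1,2) a Sm] by blast
  next
    case False
    then have "\<forall>M. \<exists>m. m + M < (\<Sum>k<m. a k)" by (auto simp: not_le)
    then show False using caseA[OF assms(1,2) a Sm] by blast
  qed
qed

end
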